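(* Let $j\ge2$, let $H$ be a graph, and let $G\cong\mathsf{TS}_j(H)$ with $q=\omega(G)\ge j+2$. Suppose every vertex of $G$ lies in exactly $t$ maximum cliques of $G$ (cliques of size $q$). Then $j$ divides $t$.
   Context: All graphs are finite, simple, undirected; $\omega(G)$ is the clique number. A $k$-clique of a graph $H$ is a set of $k$ pairwise adjacent vertices. For a graph $H$ and integer $k\ge1$, the Token Sliding graph $\mathsf{TS}_k(H)$ has as vertices the $k$-cliques of $H$, and two $k$-cliques $A,B$ are adjacent iff $A\setminus B=\{u\}$, $B\setminus A=\{v\}$ for some vertices $u,v$ with $uv\in E(H)$. *)

theory Defs
  imports Main
begin

definition graph :: "'a set \<Rightarrow> ('a \<Rightarrow> 'a \<Rightarrow> bool) \<Rightarrow> bool" where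
  "graph V E \<longleftrightarrow> finite V \<and> (\<forall>u v. E u v \<longrightarrow> u \<in> V \<and> v \<in> V \<and> u \<noteq> v \<and> E v u)"

definition is_clique :: "'a set \<Rightarrow> ('a \<Rightarrow> 'a \<Rightarrow> bool) \<Rightarrow> 'a set \<Rightarrow> bool" where
  "is_clique V E S \<longleftrightarrow> S \<subseteq> V \<and> (\<forall>u\<in>S. \<forall>v\<in>S. u \<noteq> v \<longrightarrow> E u v)"

definition k_cliques :: "'a set \<Rightarrow> ('a \<Rightarrow> 'a \<Rightarrow> bool) \<Rightarrow> nat \<Rightarrow> 'a set set" where
  "k_cliques V E k = {S. is_clique V E S \<and> finite S \<and> card S = k}"

definition clique_number :: "'a set \<Rightarrow> ('a \<Rightarrow> 'a \<Rightarrow> bool) \<Rightarrow> nat" where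
  "clique_number V E = Max {card S | S. is_clique V E S}"

definition TS_vertices :: "'a set \<Rightarrow> ('a \<Rightarrow> 'a \<Rightarrow> bool) \<Rightarrow> nat \<Rightarrow> 'a set set" where
  "TS_vertices V E k = k_cliques V E k"

definition TS_edge :: "'a set \<Rightarrow> ('a \<Rightarrow> 'a \<Rightarrow> bool) \<Rightarrow> nat \<Rightarrow> 'a set \<Rightarrow> 'a set \<Rightarrow> bool" where
  "TS_edge V E k A B \<longleftrightarrow> A \<in> k_cliques V E k \<and> B \<in> k_cliques V E k \<and>
     (\<exists>u v. A - B = {u} \<and> B - A = {v} \<and> E u v)"

definition graph_iso :: "'a set \<Rightarrow> ('a \<Rightarrow> 'a \<Rightarrow> bool) \<Rightarrow> 'b set \<Rightarrow> ('b \<Rightarrow> 'b \<Rightarrow> bool) \<Rightarrow> ('a \<Rightarrow> 'b) \<Rightarrow> bool" where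
  "graph_iso V1 E1 V2 E2 f \<longleftrightarrow> bij_betw f V1 V2 \<and> (\<forall>u\<in>V1. \<forall>v\<in>V1. E1 u v \<longleftrightarrow> E2 (f u) (f v))"

end

theory Submission imports Defs begin

lemma diff_form:
  assumes "A - B = {a}" "B - A = {b}"
  shows "a \<in> A \<and> b \<notin> A \<and> B = insert b (A - {a})"
  using assms by blast

lemma sunflower:
  fixes F :: "'a set set"
  assumes finF: "finite F" and cardB: "\<forall>B\<in>F. finite B \<and> card B = j"
    and pw: "\<forall>B\<in>F. \<forall>C\<in>F. B \<noteq> C \<longrightarrow> (\<exists>u v. B - C = {u} \<and> C - B = {v})"
    and AF: "A \<in> F" and cF: "card F \<ge> j + 2"
  shows "\<exists>a\<in>A. \<forall>B\<in>F. A - {a} \<subseteq> B"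
proof (rule ccontr)
  assume neg: "\<not> ?thesis"
  have rep: "\<exists>a b. a \<in> A \<and> b \<notin> A \<and> B = insert b (A - {a})" if BF: "B \<in> F" and BA: "B \<noteq> A" for B
  proof -
    have "A \<noteq> B" using BA by simp
    then obtain u v where "A - B = {u}" "B - A = {v}" using pw[rule_format, OF AF BF] by blast
    then show ?thesis using diff_form[of A B u v] by blast
  qed
  have "F \<noteq> {A}" using cF by auto
  then obtain B0 where B0: "B0 \<in> F" "B0 \<noteq> A" using AF by blast
  then obtain a0 b where ab0: "a0 \<in> A" "b \<notin> A" "B0 = insert b (A - {a0})" using rep by blast
  obtain C where C: "C \<in> F" "\<not> A - {a0} \<subseteq> C" using neg ab0 by blast
  have "C \<noteq> A" using C by blast
  then obtain a2 b2 where ab2: "a2 \<in> A" "b2 \<notin> A" "C = insert b2 (A - {a2})" using rep C by blast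
  have a02: "a0 \<noteq> a2" using C ab2 by blast
  have "B0 \<noteq> C" using ab0 C(2) by blast
  then obtain u v where uv: "B0 - C = {u}" "C - B0 = {v}" using pw[rule_format, OF B0(1) C(1)] by blast
  have "a2 \<in> B0 - C" using ab0 ab2 a02 by blast
  moreover have "b \<noteq> b2 \<Longrightarrow> b \<in> B0 - C" using ab0 ab2 by blast
  ultimately have bb: "b2 = b"
  proof -
    assume h1: "a2 \<in> B0 - C" and h2: "b \<noteq> b2 \<Longrightarrow> b \<in> B0 - C"
    show ?thesis
    proof (rule ccontr)
      assume "b2 \<noteq> b"
      then have "b \<in> {u}" "a2 \<in> {u}" using h1 h2 uv by auto
      then show False using ab0 ab2 by auto
    qed
  qed
  have sub: "D \<subseteq> insert b A" if D: "D \<in> F" for D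
  proof (cases "D = A")
    case True then show ?thesis by blast
  next
    case False
    then obtain aD bD where abD: "aD \<in> A" "bD \<notin> A" "D = insert bD (A - {aD})" using rep D by blast
    show ?thesis
    proof (rule ccontr)
      assume nb: "\<not> D \<subseteq> insert b A"
      then have bD: "bD \<noteq> b" using abD by auto
      have bnD: "b \<notin> D" using abD bD ab0 by auto
      have e1: "aD = a0"
      proof (rule ccontr)
        assume ne: "aD \<noteq> a0"
        have m1: "aD \<in> B0 - D" using abD ab0 bD ne by auto
        have m2: "b \<in> B0 - D" using ab0 bnD by auto
        have "B0 \<noteq> D" using bnD ab0 by auto
        then obtain u v where "B0 - D = {u}" using pw[rule_format, OF B0(1) D] by blast
        then have "aD = b" using m1 m2 by auto
        then show False using abD ab0 by auto
      qed
      have e2: "aD = a2"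
      proof (rule ccontr)
        assume ne: "aD \<noteq> a2"
        have m1: "aD \<in> C - D" using abD ab2 bD ne by auto
        have m2: "b \<in> C - D" using ab2 bb bnD by auto
        have "C \<noteq> D" using bnD ab2 bb by auto
        then obtain u v where "C - D = {u}" using pw[rule_format, OF C(1) D] by blast
        then have "aD = b" using m1 m2 by auto
        then show False using abD ab0 by auto
      qed
      show False using e1 e2 a02 by simp
    qed
  qed
  have finA: "finite A" and cA: "card A = j" using cardB AF by auto
  have "F \<subseteq> {S. S \<subseteq> insert b A \<and> card S = j}" using sub cardB by blast
  moreover have "finite {S. S \<subseteq> insert b A \<and> card S = j}" using finA by simp
  ultimately have "card F \<le> card {S. S \<subseteq> insert b A \<and> card S = j}" by (simp add: card_mono)
  also have "\<dots> = card (insert b A) choose j" using finA by (simp add: n_subsets)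
  also have "\<dots> = j + 1" using finA cA ab0 by simp
  finally show False using cF by simp
qed

definition petal :: "'a set \<Rightarrow> 'a set \<Rightarrow> 'a set set" where
  "petal K W = (\<lambda>x. insert x K) ` (W - K)"

lemma petal_inj: "inj_on (\<lambda>x. insert x K) (W - K)"
  by (auto simp: inj_on_def)

lemma card_petal: "card (petal K W) = card (W - K)"
  unfolding petal_def by (rule card_image[OF petal_inj])

lemma petal_into:
  assumes G: "graph VH EH" and j: "j \<ge> 1" and q: "q \<ge> 2" and aA: "a \<in> A"
    and A: "A \<in> k_cliques VH EH j" and W: "is_clique VH EH W" "card W = j + q - 1" "A \<subseteq> W"
  shows "petal (A - {a}) W \<in> k_cliques (k_cliques VH EH j) (TS_edge VH EH j) q \<and> A \<in> petal (A - {a}) W"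
proof -
  define K where "K = A - {a}"
  have finV: "finite VH" using G by (simp add: graph_def)
  have finW: "finite W" using W(1) finV by (meson finite_subset is_clique_def)
  have finA: "finite A" "card A = j" using A by (auto simp: k_cliques_def)
  have finK: "finite K" "card K = j - 1" using finA aA by (auto simp: K_def)
  have KW: "K \<subseteq> W" using W(3) K_def by auto
  have cWK: "card (W - K) = q" using card_Diff_subset[OF finK(1) KW] W(2) finK(2) j by simp
  have mem: "insert x K \<in> k_cliques VH EH j" if x: "x \<in> W - K" for x
  proof -
    have "insert x K \<subseteq> W" using x KW by auto
    then have "is_clique VH EH (insert x K)" using W(1) unfolding is_clique_def by blast
    moreover have "card (insert x K) = j" using x finK j by simp
    ultimately show ?thesis using finK by (simp add: k_cliques_def)
  qed
  have cl: "is_clique (k_cliques VH EH j) (TS_edge VH EH j) (petal K W)"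
    unfolding is_clique_def
  proof (intro conjI ballI impI)
    show "petal K W \<subseteq> k_cliques VH EH j" using mem unfolding petal_def by auto
  next
    fix B C assume B: "B \<in> petal K W" and C: "C \<in> petal K W" and ne: "B \<noteq> C"
    then obtain x y where xy: "x \<in> W - K" "y \<in> W - K" "B = insert x K" "C = insert y K"
      unfolding petal_def by auto
    have "x \<noteq> y" using ne xy by auto
    then have "B - C = {x}" "C - B = {y}" "EH x y" using xy W(1) unfolding is_clique_def by auto
    then show "TS_edge VH EH j B C" unfolding TS_edge_def using mem xy by blast
  qed
  have "A = insert a K" using aA K_def by auto
  moreover have "a \<in> W - K" using aA W(3) K_def by auto
  ultimately have "A \<in> petal K W" unfolding petal_def by auto
  moreover have "finite (petal K W)" using finW unfolding petal_def by simp
  ultimately show ?thesis using cl card_petal[of K W] cWK unfolding K_def[symmetric]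
    by (simp add: k_cliques_def)
qed

lemma petal_inj2:
  assumes "a \<in> A" "a' \<in> A" "K = A - {a}" "K' = A - {a'}" "K \<subseteq> W" "K' \<subseteq> W'"
    and "card (W - K) \<ge> 2" "finite W" and eq: "petal K W = petal K' W'"
  shows "a = a' \<and> W = W'"
proof -
  have aa: "a = a'"
  proof (rule ccontr)
    assume ne: "a \<noteq> a'"
    have "\<exists>x. x \<in> W - K \<and> x \<noteq> a"
    proof (rule ccontr)
      assume "\<not> ?thesis"
      then have "W - K \<subseteq> {a}" by auto
      then have "card (W - K) \<le> 1" using card_mono[of "{a}" "W - K"] by simp
      then show False using assms(7) by simp
    qed
    then obtain x where x: "x \<in> W - K" "x \<noteq> a" by blast
    then have "insert x K \<in> petal K' W'" using eq unfolding petal_def by auto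
    then obtain y where "insert x K = insert y K'" unfolding petal_def by auto
    moreover have "a \<in> K'" using assms ne by auto
    ultimately have "a \<in> insert x K" by auto
    then show False using x assms by auto
  qed
  have KK: "K = K'" using aa assms by simp
  have U: "\<Union> (petal K W) = W" if "K \<subseteq> W" "W - K \<noteq> {}" for K W :: "'a set"
    using that unfolding petal_def by auto
  have "W - K \<noteq> {}" using assms(7) by (metis card.empty not_numeral_le_zero)
  moreover have "W' - K \<noteq> {}"
  proof
    assume "W' - K = {}"
    then have "petal K' W' = {}" using KK unfolding petal_def by auto
    then have "petal K W = {}" using eq by simp
    then show False using \<open>W - K \<noteq> {}\<close> unfolding petal_def by simp
  qed
  ultimately have "W = W'" using U[of K W] U[of K W'] eq KK assms by metis
  then show ?thesis using aa by simp
qed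


lemma petal_surj:
  assumes G: "graph VH EH" and j: "j \<ge> 1" and q: "q \<ge> j + 2"
    and A: "A \<in> k_cliques VH EH j"
    and T: "T \<in> k_cliques (k_cliques VH EH j) (TS_edge VH EH j) q" and AT: "A \<in> T"
  shows "\<exists>a\<in>A. \<exists>W. is_clique VH EH W \<and> card W = j + q - 1 \<and> A \<subseteq> W \<and> T = petal (A - {a}) W"
proof -
  have finT: "finite T" "card T = q" and Tsub: "T \<subseteq> k_cliques VH EH j"
    and Tcl: "\<forall>B\<in>T. \<forall>C\<in>T. B \<noteq> C \<longrightarrow> TS_edge VH EH j B C"
    using T unfolding k_cliques_def is_clique_def by simp_all
  have Bj: "\<forall>B\<in>T. finite B \<and> card B = j" using Tsub by (auto simp: k_cliques_def)
  have pw: "\<forall>B\<in>T. \<forall>C\<in>T. B \<noteq> C \<longrightarrow> (\<exists>u v. B - C = {u} \<and> C - B = {v})"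
  proof (intro ballI impI)
    fix B C assume "B \<in> T" "C \<in> T" "B \<noteq> C"
    then have "TS_edge VH EH j B C" using Tcl by blast
    then show "\<exists>u v. B - C = {u} \<and> C - B = {v}" unfolding TS_edge_def by blast
  qed
  obtain a where aA: "a \<in> A" and core: "\<forall>B\<in>T. A - {a} \<subseteq> B"
    using sunflower[OF finT(1) Bj pw AT] q finT(2) by auto
  define K where "K = A - {a}"
  have finA: "finite A" "card A = j" using A by (auto simp: k_cliques_def)
  have finK: "finite K" "card K = j - 1" using finA aA by (auto simp: K_def)
  have form: "\<exists>x. x \<notin> K \<and> B = insert x K" if B: "B \<in> T" for B
  proof -
    have KB: "K \<subseteq> B" unfolding K_def using core B by blast
    have cB: "card B = j" using Bj B by blast
    have "card (B - K) = 1" using card_Diff_subset[OF finK(1) KB] cB finK(2) j by simp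
    then obtain x where x: "B - K = {x}" by (auto simp: card_1_singleton_iff)
    have "x \<notin> K" using x by auto
    moreover have "B = insert x K" using x KB by auto
    ultimately show ?thesis by blast
  qed
  define W where "W = \<Union> T"
  have KW: "K \<subseteq> W" using AT K_def W_def by auto
  have Tp: "T = petal K W"
  proof
    show "T \<subseteq> petal K W"
    proof
      fix B assume B: "B \<in> T"
      then obtain x where "x \<notin> K" "B = insert x K" using form by blast
      moreover have "x \<in> W" using B calculation W_def by auto
      ultimately show "B \<in> petal K W" unfolding petal_def by auto
    qed
  next
    show "petal K W \<subseteq> T"
    proof
      fix C assume "C \<in> petal K W"
      then obtain x where x: "x \<in> W" "x \<notin> K" "C = insert x K" unfolding petal_def by auto
      then obtain B where B: "B \<in> T" "x \<in> B" using W_def by auto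
      obtain y where "y \<notin> K" "B = insert y K" using form B(1) by blast
      then have "B = C" using x B by auto
      then show "C \<in> T" using B by simp
    qed
  qed
  have finV: "finite VH" using G by (simp add: graph_def)
  have WV: "W \<subseteq> VH" using Tsub W_def by (auto simp: k_cliques_def is_clique_def)
  have Wcl: "is_clique VH EH W"
    unfolding is_clique_def
  proof (intro conjI ballI impI)
    show "W \<subseteq> VH" by (rule WV)
  next
    fix u v assume u: "u \<in> W" and v: "v \<in> W" and uv: "u \<noteq> v"
    obtain B where B: "B \<in> T" "u \<in> B" using u W_def by auto
    obtain C where C: "C \<in> T" "v \<in> C" using v W_def by auto
    have clB: "\<And>B. B \<in> T \<Longrightarrow> is_clique VH EH B" using Tsub by (auto simp: k_cliques_def)
    have KB': "\<And>B. B \<in> T \<Longrightarrow> K \<subseteq> B" unfolding K_def using core by blast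
    show "EH u v"
    proof (cases "u \<in> K \<or> v \<in> K \<or> B = C")
      case True
      then have "(u \<in> C \<and> v \<in> C) \<or> (u \<in> B \<and> v \<in> B)" using B C KB'[OF B(1)] KB'[OF C(1)] by auto
      moreover have "is_clique VH EH B" "is_clique VH EH C" using clB B(1) C(1) by auto
      ultimately show ?thesis using uv unfolding is_clique_def by auto
    next
      case False
      obtain x where x: "x \<notin> K" "B = insert x K" using form B(1) by blast
      obtain y where y: "y \<notin> K" "C = insert y K" using form C(1) by blast
      have ux: "u = x" using x B False by auto
      have vy: "v = y" using y C False by auto
      have d: "B - C = {u}" "C - B = {v}" using x y ux vy uv by auto
      have "TS_edge VH EH j B C" using Tcl B(1) C(1) False by blast
      then obtain u' v' where "B - C = {u'}" "C - B = {v'}" "EH u' v'"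
        unfolding TS_edge_def by blast
      with d show ?thesis by auto
    qed
  qed
  have "card W = card K + card (W - K)"
    using card_Diff_subset[OF finK(1) KW] finite_subset[OF WV finV] card_mono[OF _ KW] by simp
  moreover have "card (W - K) = q" using card_petal[of K W] Tp finT(2) by simp
  ultimately have "card W = j + q - 1" using finK(2) j by simp
  moreover have "A \<subseteq> W" using AT W_def by auto
  ultimately show ?thesis using aA Wcl Tp K_def by blast
qed


lemma count_TS:
  assumes G: "graph VH EH" and j: "j \<ge> 1" and q: "q \<ge> j + 2"
    and A: "A \<in> k_cliques VH EH j"
  shows "card {T. T \<in> k_cliques (k_cliques VH EH j) (TS_edge VH EH j) q \<and> A \<in> T}
         = j * card {W. is_clique VH EH W \<and> card W = j + q - 1 \<and> A \<subseteq> W}"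
proof -
  define CC where "CC = {T. T \<in> k_cliques (k_cliques VH EH j) (TS_edge VH EH j) q \<and> A \<in> T}"
  define WW where "WW = {W. is_clique VH EH W \<and> card W = j + q - 1 \<and> A \<subseteq> W}"
  define \<Phi> where "\<Phi> = (\<lambda>p. petal (A - {fst p}) (snd p))"
  have finV: "finite VH" using G by (simp add: graph_def)
  have finA: "finite A" "card A = j" using A by (auto simp: k_cliques_def)
  have cWK: "card (W - (A - {a})) = q" "finite W" if "a \<in> A" "W \<in> WW" for a W
  proof -
    have W: "is_clique VH EH W" "card W = j + q - 1" "A \<subseteq> W" using that WW_def by auto
    show "finite W" using W(1) finV by (meson finite_subset is_clique_def)
    have "card (A - {a}) = j - 1" using finA that by simp
    then show "card (W - (A - {a})) = q" using card_Diff_subset[of "A - {a}" W] finA W j by auto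
  qed
  have "bij_betw \<Phi> (A \<times> WW) CC"
    unfolding bij_betw_def
  proof (intro conjI)
    show "inj_on \<Phi> (A \<times> WW)"
    proof (rule inj_onI)
      fix p p' assume p: "p \<in> A \<times> WW" and p': "p' \<in> A \<times> WW" and e: "\<Phi> p = \<Phi> p'"
      have "fst p = fst p' \<and> snd p = snd p'"
      proof (rule petal_inj2[where A=A])
        show "fst p \<in> A" "fst p' \<in> A" using p p' by auto
        show "A - {fst p} \<subseteq> snd p" "A - {fst p'} \<subseteq> snd p'" using p p' WW_def by auto
        show "2 \<le> card (snd p - (A - {fst p}))" using cWK[of "fst p" "snd p"] p q by auto
        show "finite (snd p)" using cWK[of "fst p" "snd p"] p by auto
        show "petal (A - {fst p}) (snd p) = petal (A - {fst p'}) (snd p')" using e \<Phi>_def by simp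
      qed auto
      then show "p = p'" by (simp add: prod_eq_iff)
    qed
  next
    show "\<Phi> ` (A \<times> WW) = CC"
    proof
      show "\<Phi> ` (A \<times> WW) \<subseteq> CC"
      proof
        fix T assume "T \<in> \<Phi> ` (A \<times> WW)"
        then obtain a W where aW: "a \<in> A" "W \<in> WW" "T = petal (A - {a}) W" using \<Phi>_def by auto
        have W: "is_clique VH EH W" "card W = j + q - 1" "A \<subseteq> W" using aW WW_def by auto
        show "T \<in> CC" using petal_into[OF G j _ aW(1) A W] q aW(3) CC_def by auto
      qed
    next
      show "CC \<subseteq> \<Phi> ` (A \<times> WW)"
      proof
        fix T assume "T \<in> CC"
        then have T: "T \<in> k_cliques (k_cliques VH EH j) (TS_edge VH EH j) q" "A \<in> T" using CC_def by auto
        obtain a W where "a \<in> A" "is_clique VH EH W" "card W = j + q - 1" "A \<subseteq> W" "T = petal (A - {a}) W"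
          using petal_surj[OF G j q A T] by blast
        then have "(a, W) \<in> A \<times> WW" "T = \<Phi> (a, W)" using WW_def \<Phi>_def by auto
        then show "T \<in> \<Phi> ` (A \<times> WW)" by blast
      qed
    qed
  qed
  then have "card CC = card (A \<times> WW)" by (simp add: bij_betw_same_card)
  also have "\<dots> = j * card WW" using finA by (simp add: card_cartesian_product)
  finally show ?thesis using CC_def WW_def by simp
qed

lemma transfer_count:
  assumes iso: "graph_iso V1 E1 V2 E2 f" and v: "v \<in> V1"
  shows "card {S. S \<in> k_cliques V1 E1 q \<and> v \<in> S} = card {T. T \<in> k_cliques V2 E2 q \<and> f v \<in> T}"
proof -
  have bij: "bij_betw f V1 V2" and E: "\<forall>u\<in>V1. \<forall>w\<in>V1. E1 u w \<longleftrightarrow> E2 (f u) (f w)"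
    using iso by (auto simp: graph_iso_def)
  have inj: "inj_on f V1" and im: "f ` V1 = V2" using bij by (auto simp: bij_betw_def)
  let ?L = "{S. S \<in> k_cliques V1 E1 q \<and> v \<in> S}"
  let ?R = "{T. T \<in> k_cliques V2 E2 q \<and> f v \<in> T}"
  have injL: "inj_on ((`) f) ?L"
  proof (rule inj_onI)
    fix S S' assume "S \<in> ?L" "S' \<in> ?L" "f ` S = f ` S'"
    moreover have "S \<subseteq> V1" "S' \<subseteq> V1" using calculation by (auto simp: k_cliques_def is_clique_def)
    ultimately show "S = S'" using inj_on_image_eq_iff[OF inj] by blast
  qed
  have "(`) f ` ?L = ?R"
  proof
    show "(`) f ` ?L \<subseteq> ?R"
    proof
      fix T assume "T \<in> (`) f ` ?L"
      then obtain S where S: "S \<in> ?L" "T = f ` S" by blast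
      have SV: "S \<subseteq> V1" and fS: "finite S" "card S = q" and cl: "\<forall>u\<in>S. \<forall>w\<in>S. u \<noteq> w \<longrightarrow> E1 u w"
        using S(1) by (auto simp: k_cliques_def is_clique_def)
      have injS: "inj_on f S" using inj SV inj_on_subset by blast
      have "T \<subseteq> V2" using SV im S(2) by auto
      moreover have "\<forall>x\<in>T. \<forall>y\<in>T. x \<noteq> y \<longrightarrow> E2 x y"
      proof (intro ballI impI)
        fix x y assume "x \<in> T" "y \<in> T" "x \<noteq> y"
        then obtain u w where "u \<in> S" "w \<in> S" "x = f u" "y = f w" "u \<noteq> w" using S(2) by auto
        then show "E2 x y" using cl E SV by blast
      qed
      moreover have "finite T" "card T = q" using fS S(2) card_image[OF injS] by auto
      moreover have "f v \<in> T" using S by auto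
      ultimately show "T \<in> ?R" by (simp add: k_cliques_def is_clique_def)
    qed
  next
    show "?R \<subseteq> (`) f ` ?L"
    proof
      fix T assume T: "T \<in> ?R"
      have TV: "T \<subseteq> V2" and fT: "finite T" "card T = q" and cl: "\<forall>x\<in>T. \<forall>y\<in>T. x \<noteq> y \<longrightarrow> E2 x y"
        and fv: "f v \<in> T"
        using T by (auto simp: k_cliques_def is_clique_def)
      define S where "S = {x \<in> V1. f x \<in> T}"
      have SV: "S \<subseteq> V1" using S_def by auto
      have fS: "f ` S = T" using TV im S_def by auto
      have injS: "inj_on f S" using inj SV inj_on_subset by blast
      have finS: "finite S" using fT fS injS finite_imageD by blast
      have "card S = q" using card_image[OF injS] fS fT by simp
      moreover have "\<forall>u\<in>S. \<forall>w\<in>S. u \<noteq> w \<longrightarrow> E1 u w"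
      proof (intro ballI impI)
        fix u w assume uw: "u \<in> S" "w \<in> S" "u \<noteq> w"
        then have "f u \<noteq> f w" using injS by (auto dest: inj_onD)
        moreover have "f u \<in> T" "f w \<in> T" using uw S_def by auto
        ultimately have "E2 (f u) (f w)" using cl by blast
        then show "E1 u w" using E SV uw by blast
      qed
      moreover have "v \<in> S" using v fv S_def by auto
      ultimately have "S \<in> ?L" using SV finS by (simp add: k_cliques_def is_clique_def)
      then show "T \<in> (`) f ` ?L" using fS by blast
    qed
  qed
  then show ?thesis using card_image[OF injL] by simp
qed

theorem proposition3p13:
  fixes VH :: "'a set" and EH :: "'a \<Rightarrow> 'a \<Rightarrow> bool"
    and VG :: "'b set" and EG :: "'b \<Rightarrow> 'b \<Rightarrow> bool"
    and j t q :: nat and f :: "'b \<Rightarrow> 'a set"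
  assumes "graph VH EH" and "graph VG EG"
    and "j \<ge> 2"
    and "graph_iso VG EG (TS_vertices VH EH j) (TS_edge VH EH j) f"
    and "q = clique_number VG EG" and "q \<ge> j + 2"
    and "\<forall>v\<in>VG. card {S. S \<in> k_cliques VG EG q \<and> v \<in> S} = t"
  shows "j dvd t"
proof -
  have "VG \<noteq> {}"
  proof
    assume e: "VG = {}"
    have "{card S | S. is_clique VG EG S} = {0}"
      using e by (auto simp: is_clique_def intro: exI[of _ "{}"])
    then have "q = 0" using assms(5) by (simp add: clique_number_def)
    then show False using assms(6) by simp
  qed
  then obtain v where v: "v \<in> VG" by blast
  have A: "f v \<in> k_cliques VH EH j"
    using assms(4) v by (auto simp: graph_iso_def TS_vertices_def bij_betw_def)
  have "t = card {S. S \<in> k_cliques VG EG q \<and> v \<in> S}" using assms(7) v by simp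
  also have "\<dots> = card {T. T \<in> k_cliques (k_cliques VH EH j) (TS_edge VH EH j) q \<and> f v \<in> T}"
    using transfer_count[OF assms(4) v] by (simp add: TS_vertices_def)
  also have "\<dots> = j * card {W. is_clique VH EH W \<and> card W = j + q - 1 \<and> f v \<subseteq> W}"
    using count_TS[OF assms(1) _ assms(6) A] assms(3) by simp
  finally show ?thesis by simp
qed

end
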